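(* Let $(\mathcal X,d)$ be a compact metric space and $K:\mathcal X^2\to\mathbb R$ continuous. If $\mu$ is a Borel probability measure on $\mathcal X$ and $T:\mathcal X\to\mathcal X$ is an ergodic measure-preserving transformation relative to $\mu$ (not necessarily continuous), then for $\mu$-almost every $x$, $$\lim_{n\to\infty}\frac1{n^2}\sum_{i=1}^n\sum_{j=1}^nK(T^ix,T^jx)=\iint_{\mathcal X\times\mathcal X}K(y,z)\,d\mu(y)\,d\mu(z).$$ *)

theory Defs
  imports "HOL-Probability.Probability"
begin

definition mpt :: "'a measure \<Rightarrow> ('a \<Rightarrow> 'a) \<Rightarrow> bool" where
  "mpt M T \<longleftrightarrow> T \<in> measurable M M \<and>
     (\<forall>A \<in> sets M. emeasure M (T -` A \<inter> space M) = emeasure M A)"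

definition ergodic_mpt :: "'a measure \<Rightarrow> ('a \<Rightarrow> 'a) \<Rightarrow> bool" where
  "ergodic_mpt M T \<longleftrightarrow> mpt M T \<and>
     (\<forall>A \<in> sets M. T -` A \<inter> space M = A \<longrightarrow> emeasure M A = 0 \<or> emeasure M A = 1)"

end

theory Submission
  imports Defs
begin


definition Sb :: "('a\<Rightarrow>'a) \<Rightarrow> ('a\<Rightarrow>real) \<Rightarrow> nat \<Rightarrow> 'a \<Rightarrow> real" where
  "Sb T g n x = (\<Sum>i<n. g ((T^^i) x))"

primrec Mx :: "('a\<Rightarrow>'a) \<Rightarrow> ('a\<Rightarrow>real) \<Rightarrow> nat \<Rightarrow> 'a \<Rightarrow> real" where
  "Mx T g 0 x = 0"
| "Mx T g (Suc n) x = max (Mx T g n x) (Sb T g (Suc n) x)"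

lemma Sb_0[simp]: "Sb T g 0 x = 0" by (simp add: Sb_def)

lemma Sb_Suc: "Sb T g (Suc k) x = g x + Sb T g k (T x)"
  unfolding Sb_def sum.lessThan_Suc_shift by (simp add: funpow_Suc_right del: funpow.simps)

lemma Mx_nonneg: "0 \<le> Mx T g n x"
  by (induction n) auto

lemma Mx_ge: "k \<le> n \<Longrightarrow> Sb T g k x \<le> Mx T g n x"
proof (induction n)
  case 0 then show ?case by simp
next
  case (Suc n) then show ?case by (cases "k = Suc n") auto
qed

lemma Mx_attained: "0 < Mx T g n x \<Longrightarrow> \<exists>k. 1 \<le> k \<and> k \<le> n \<and> Mx T g n x = Sb T g k x"
proof (induction n)
  case 0 then show ?case by simp
next
  case (Suc n)
  show ?case
  proof (cases "Mx T g n x \<le> Sb T g (Suc n) x")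
    case True then show ?thesis by auto
  next
    case False
    then have "0 < Mx T g n x" "Mx T g (Suc n) x = Mx T g n x" using Suc.prems by auto
    then show ?thesis using Suc.IH by (metis le_SucI)
  qed
qed

lemma Mx_key: "Mx T g n x - Mx T g n (T x) \<le> indicator {y. 0 < Mx T g n y} x * g x"
proof (cases "0 < Mx T g n x")
  case True
  from Mx_attained[OF True] obtain k where k: "1 \<le> k" "k \<le> n" "Mx T g n x = Sb T g k x" by blast
  then obtain j where j: "k = Suc j" by (cases k) auto
  have e: "Sb T g k x = g x + Sb T g j (T x)" unfolding j by (rule Sb_Suc)
  have l: "Sb T g j (T x) \<le> Mx T g n (T x)" using j k by (intro Mx_ge) simp
  have i: "indicator {y. 0 < Mx T g n y} x = (1::real)" using True by (simp add: indicator_def)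
  show ?thesis unfolding i using e l k(3) by linarith
next
  case False
  have i: "indicator {y. 0 < Mx T g n y} x = (0::real)" using False by (simp add: indicator_def)
  show ?thesis unfolding i using False Mx_nonneg[of T g n x] Mx_nonneg[of T g n "T x"] by linarith
qed

lemma Sb_bound: assumes "\<And>x. \<bar>g x\<bar> \<le> C" shows "\<bar>Sb T g n x\<bar> \<le> real n * C"
proof -
  have "\<bar>Sb T g n x\<bar> \<le> (\<Sum>i<n. \<bar>g ((T^^i) x)\<bar>)" unfolding Sb_def by (rule sum_abs)
  also have "\<dots> \<le> real (card {..<n}) * C" by (rule sum_bounded_above) (use assms in auto)
  finally show ?thesis by simp
qed

lemma Mx_bound: "(\<And>x. \<bar>g x\<bar> \<le> C) \<Longrightarrow> \<bar>Mx T g n x\<bar> \<le> real n * C"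
proof (induction n)
  case 0 then show ?case by simp
next
  case (Suc n)
  have "0 \<le> C" using Suc.prems[of x] by simp
  have a: "Mx T g n x \<le> real n * C" using Suc by (simp add: abs_le_iff)
  have b: "Sb T g (Suc n) x \<le> real (Suc n) * C" using Sb_bound[of g C T "Suc n" x] Suc.prems by (simp add: abs_le_iff)
  have c: "real n * C \<le> real (Suc n) * C" using \<open>0 \<le> C\<close> by (simp add: mult_right_mono)
  have "Mx T g (Suc n) x \<le> real (Suc n) * C" using a b c by simp
  then show ?case using Mx_nonneg[of T g "Suc n" x] by simp
qed

locale erg = prob_space M for M :: "'a measure" +
  fixes T :: "'a \<Rightarrow> 'a"
  assumes ergT: "ergodic_mpt M T" and spUNIV: "space M = UNIV"
begin

lemma Tm: "T \<in> measurable M M" using ergT by (simp add: ergodic_mpt_def mpt_def)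

lemma distrT: "distr M M T = M"
proof (rule measure_eqI)
  fix A assume "A \<in> sets (distr M M T)"
  then show "emeasure (distr M M T) A = emeasure M A"
    using ergT Tm by (simp add: emeasure_distr ergodic_mpt_def mpt_def)
qed simp

lemma intT: "(g :: 'a \<Rightarrow> real) \<in> borel_measurable M \<Longrightarrow> integral\<^sup>L M (\<lambda>x. g (T x)) = integral\<^sup>L M g"
  using integral_distr[OF Tm, of g] distrT by simp

lemma Tn_m: "(T^^n) \<in> measurable M M"
  by (induction n) (auto intro: measurable_compose[OF _ Tm])

lemma Sb_m: "g \<in> borel_measurable M \<Longrightarrow> Sb T g n \<in> borel_measurable M"
  unfolding Sb_def by (intro borel_measurable_sum measurable_compose[OF Tn_m]) auto

lemma Mx_m: "g \<in> borel_measurable M \<Longrightarrow> Mx T g n \<in> borel_measurable M"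
proof (induction n)
  case 0
  have "Mx T g 0 = (\<lambda>x. 0)" by (rule ext) simp
  then show ?case by simp
next
  case (Suc n)
  have "Mx T g (Suc n) = (\<lambda>x. max (Mx T g n x) (Sb T g (Suc n) x))" by (rule ext) simp
  then show ?case using Suc Sb_m by (simp add: borel_measurable_max)
qed

lemma bint: "(g :: 'a \<Rightarrow> real) \<in> borel_measurable M \<Longrightarrow> (\<And>x. \<bar>g x\<bar> \<le> (C::real)) \<Longrightarrow> integrable M g"
  by (rule integrable_const_bound[where B=C]) auto

lemma maximal:
  assumes gm: "g \<in> borel_measurable M" and gb: "\<And>x. \<bar>g x\<bar> \<le> C"
  shows "0 \<le> integral\<^sup>L M (\<lambda>x. indicator {y. 0 < Mx T g n y} x * g x)"
proof -
  have Mm: "Mx T g n \<in> borel_measurable M" using Mx_m gm .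
  have MTm: "(\<lambda>x. Mx T g n (T x)) \<in> borel_measurable M" by (rule measurable_compose[OF Tm Mm])
  have Ai: "integrable M (Mx T g n)" using bint[OF Mm Mx_bound[OF gb]] .
  have ATi: "integrable M (\<lambda>x. Mx T g n (T x))" using bint[OF MTm Mx_bound[OF gb]] .
  note Mm[measurable] gm[measurable]
  have Aset0: "{y\<in>space M. 0 < Mx T g n y} \<in> sets M" by measurable
  then have Aset: "{y. 0 < Mx T g n y} \<in> sets M" using spUNIV by simp
  have Ii: "integrable M (\<lambda>x. indicator {y. 0 < Mx T g n y} x * g x)"
    apply (rule bint[where C=C])
    using Aset apply measurable
    using gb order_trans[OF abs_ge_zero gb] by (auto simp: indicator_def)
  have "0 = integral\<^sup>L M (Mx T g n) - integral\<^sup>L M (\<lambda>x. Mx T g n (T x))" using intT[OF Mm] by simp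
  also have "\<dots> = integral\<^sup>L M (\<lambda>x. Mx T g n x - Mx T g n (T x))" using Ai ATi by simp
  also have "\<dots> \<le> integral\<^sup>L M (\<lambda>x. indicator {y. 0 < Mx T g n y} x * g x)"
    using Ai ATi by (intro integral_mono[OF _ Ii Mx_key]) auto
  finally show ?thesis .
qed

lemma Hset_null:
  assumes gm: "g \<in> borel_measurable M" and gb: "\<And>x. \<bar>g x\<bar> \<le> C" and neg: "integral\<^sup>L M g < 0"
  shows "AE x in M. \<exists>B. \<forall>n. Sb T g n x \<le> B"
proof -
  define H where "H = {x. \<forall>B::nat. \<exists>n. real B < Sb T g n x}"
  have C0: "0 \<le> C" using gb[of undefined] by simp
  note Sb_m[OF gm, measurable]
  have "{x\<in>space M. \<forall>B::nat. \<exists>n::nat. real B < Sb T g n x} \<in> sets M" by measurable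
  then have Hs: "H \<in> sets M" unfolding H_def using spUNIV by simp
  have inv: "T -` H \<inter> space M = H"
  proof -
    have "T x \<in> H \<longleftrightarrow> x \<in> H" for x
    proof
      assume Tx: "T x \<in> H"
      have "\<forall>B::nat. \<exists>n. real B < Sb T g n x"
      proof
        fix B :: nat
        obtain n where n: "real (B + nat \<lceil>C\<rceil>) < Sb T g n (T x)" using Tx unfolding H_def by blast
        have "real (B + nat \<lceil>C\<rceil>) \<ge> real B + C" using C0 by linarith
        moreover have "g x \<ge> - C" using gb[of x] by linarith
        ultimately have "real B < Sb T g (Suc n) x" using n Sb_Suc[of T g n x] by linarith
        then show "\<exists>n. real B < Sb T g n x" by blast
      qed
      then show "x \<in> H" unfolding H_def by simp
    next
      assume x: "x \<in> H"
      have "\<forall>B::nat. \<exists>n. real B < Sb T g n (T x)"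
      proof
        fix B :: nat
        obtain n where n: "real (B + nat \<lceil>C\<rceil>) < Sb T g n x" using x unfolding H_def by blast
        have b: "real (B + nat \<lceil>C\<rceil>) \<ge> real B + C" using C0 by linarith
        have "n \<noteq> 0"
        proof
          assume "n = 0"
          with n have "real (B + nat \<lceil>C\<rceil>) < 0" by simp
          then show False by linarith
        qed
        then obtain m where m: "n = Suc m" by (cases n) auto
        have "g x \<le> C" using gb[of x] by linarith
        have n': "real (B + nat \<lceil>C\<rceil>) < Sb T g (Suc m) x" using n m by simp
        then have "real B < Sb T g m (T x)" using b Sb_Suc[of T g m x] \<open>g x \<le> C\<close> by linarith
        then show "\<exists>n. real B < Sb T g n (T x)" by blast
      qed
      then show "T x \<in> H" unfolding H_def by simp
    qed
    then show ?thesis using spUNIV by auto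
  qed
  have H01: "emeasure M H = 0 \<or> emeasure M H = 1"
    using ergT Hs inv by (auto simp: ergodic_mpt_def)
  have "emeasure M H \<noteq> 1"
  proof
    assume H1: "emeasure M H = 1"
    then have "prob H = 1" by (simp add: measure_def)
    then have AEH: "AE x in M. x \<in> H" using AE_in_set_eq_1[OF Hs] by simp
    define A where "A n = {y. 0 < Mx T g n y}" for n
    have Am: "A n \<in> sets M" for n
    proof -
      note Mx_m[OF gm, measurable]
      have "{y\<in>space M. 0 < Mx T g n y} \<in> sets M" by measurable
      then show ?thesis unfolding A_def using spUNIV by simp
    qed
    have lim: "(\<lambda>n. integral\<^sup>L M (\<lambda>x. indicator (A n) x * g x)) \<longlonglongrightarrow> integral\<^sup>L M g"
    proof (rule integral_dominated_convergence[where w="\<lambda>x. C"])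
      show "g \<in> borel_measurable M" by (rule gm)
      show "(\<lambda>x. indicator (A n) x * g x) \<in> borel_measurable M" for n
        using Am[of n] gm by measurable
      show "integrable M (\<lambda>x. C)" by simp
      show "AE x in M. norm (indicator (A n) x * g x) \<le> C" for n
        using gb C0 by (auto simp: indicator_def)
      show "AE x in M. (\<lambda>n. indicator (A n) x * g x) \<longlonglongrightarrow> g x"
        using AEH
      proof eventually_elim
        case (elim x)
        then have "\<exists>n. real (0::nat) < Sb T g n x" unfolding H_def by blast
        then obtain n0 where n0: "0 < Sb T g n0 x" by auto
        have "eventually (\<lambda>n. indicator (A n) x * g x = g x) sequentially"
          unfolding eventually_sequentially
        proof (intro exI allI impI)
          fix n assume "n0 \<le> n"
          then have "0 < Mx T g n x" using Mx_ge[of n0 n T g x] n0 by linarith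
          then show "indicator (A n) x * g x = g x" unfolding A_def by simp
        qed
        then show ?case by (rule tendsto_eventually)
      qed
    qed
    have "0 \<le> integral\<^sup>L M g"
      using LIMSEQ_le_const[OF lim] maximal[OF gm gb] unfolding A_def by blast
    then show False using neg by simp
  qed
  then have "emeasure M H = 0" using H01 by blast
  then have "H \<in> null_sets M" using Hs by (simp add: null_setsI)
  then have "AE x in M. x \<notin> H" by (rule AE_not_in)
  then show ?thesis
  proof eventually_elim
    case (elim x)
    then obtain B :: nat where "\<forall>n. Sb T g n x \<le> real B" unfolding H_def by (auto simp: not_less)
    then show ?case by blast
  qed
qed

end


lemma conv_lemma:
  fixes a :: "nat \<Rightarrow> real"
  assumes up: "\<forall>m::nat. \<exists>B. \<forall>n. a n \<le> real n * (L + 1/(real m+1)) + B"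
    and lo: "\<forall>m::nat. \<exists>B. \<forall>n. - a n \<le> real n * (- L + 1/(real m+1)) + B"
  shows "(\<lambda>n. a n / real n) \<longlonglongrightarrow> L"
proof (rule LIMSEQ_I)
  fix r :: real assume r: "0 < r"
  obtain m :: nat where m0: "2/r < real m" using reals_Archimedean2 by blast
  have "2 < r * real m" using m0 r by (simp add: field_simps)
  then have m: "1/(real m+1) < r/2" using r by (simp add: field_simps)
  obtain B1 where B1: "\<And>n. a n \<le> real n * (L + 1/(real m+1)) + B1" using up by blast
  obtain B2 where B2: "\<And>n. - a n \<le> real n * (- L + 1/(real m+1)) + B2" using lo by blast
  define B where "B = max \<bar>B1\<bar> \<bar>B2\<bar>"
  obtain N :: nat where N: "2*B/r < real N" using reals_Archimedean2 by blast
  show "\<exists>no. \<forall>n\<ge>no. norm (a n / real n - L) < r"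
  proof (intro exI allI impI)
    fix n assume nN: "Suc N \<le> n"
    then have npos: "0 < real n" by simp
    have "2*B/r < real n" using N nN by linarith
    then have Bn: "B < real n * (r/2)" using r by (simp add: field_simps)
    have q: "real n / (real m+1) \<le> real n * (r/2)" using m npos
      by (metis less_eq_real_def mult_left_mono of_nat_0_le_iff times_divide_eq_right mult_1_right)
    have e1: "real n * (L + 1/(real m+1)) = real n * L + real n / (real m+1)" by (simp add: algebra_simps)
    have e2: "real n * (- L + 1/(real m+1)) = - real n * L + real n / (real m+1)" by (simp add: algebra_simps)
    have "\<bar>a n - real n * L\<bar> < real n * r"
    proof -
      have b: "B1 \<le> B" "B2 \<le> B" unfolding B_def by auto
      show ?thesis unfolding abs_less_iff
        using B1[of n] B2[of n] e1 e2 q Bn b by (intro conjI; linarith)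
    qed
    moreover have "a n / real n - L = (a n - real n * L) / real n" using npos by (simp add: field_simps)
    ultimately show "norm (a n / real n - L) < r" using npos
      by (simp add: abs_divide pos_divide_less_eq mult.commute)
  qed
qed

lemma sum_1n: "(\<Sum>i\<in>{1..n}. h i) = (\<Sum>i<Suc n. h i) - (h 0 :: real)"
  by (induction n) auto

context erg begin

lemma upper:
  assumes fm: "f \<in> borel_measurable M" and fb: "\<And>x. \<bar>f x\<bar> \<le> C" and c: "integral\<^sup>L M f < c"
  shows "AE x in M. \<exists>B. \<forall>n. Sb T f n x \<le> real n * c + B"
proof -
  define g where "g x = f x - c" for x
  have gm: "g \<in> borel_measurable M" unfolding g_def using fm by simp
  have gb: "\<bar>g x\<bar> \<le> C + \<bar>c\<bar>" for x unfolding g_def using fb[of x] by linarith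
  have "integrable M f" using bint[OF fm fb] .
  then have "integral\<^sup>L M g = integral\<^sup>L M f - c" unfolding g_def by (simp add: prob_space)
  then have neg: "integral\<^sup>L M g < 0" using c by simp
  have S: "Sb T g n x = Sb T f n x - real n * c" for n x
    unfolding Sb_def g_def by (simp add: sum_subtractf)
  show ?thesis using Hset_null[OF gm gb neg]
  proof eventually_elim
    case (elim x)
    then obtain B where "\<forall>n. Sb T g n x \<le> B" by blast
    then show ?case using S by (metis add.commute diff_le_eq)
  qed
qed

lemma birkhoff:
  assumes fm: "f \<in> borel_measurable M" and fb: "\<And>x. \<bar>f x\<bar> \<le> C"
  shows "AE x in M. (\<lambda>n. (\<Sum>i\<in>{1..n}. f ((T^^i) x)) / real n) \<longlonglongrightarrow> integral\<^sup>L M f"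
proof -
  define L where "L = integral\<^sup>L M f"
  have fi: "integrable M f" using bint[OF fm fb] .
  have U: "AE x in M. \<forall>m::nat. \<exists>B. \<forall>n. Sb T f n x \<le> real n * (L + 1/(real m+1)) + B"
    unfolding AE_all_countable
  proof
    fix m :: nat
    show "AE x in M. \<exists>B. \<forall>n. Sb T f n x \<le> real n * (L + 1/(real m+1)) + B"
      by (rule upper[OF fm fb]) (simp add: L_def)
  qed
  have fm': "(\<lambda>x. - f x) \<in> borel_measurable M" using fm by simp
  have fb': "\<bar>- f x\<bar> \<le> C" for x using fb[of x] by simp
  have Lm: "integral\<^sup>L M (\<lambda>x. - f x) = - L" unfolding L_def by simp
  have D: "AE x in M. \<forall>m::nat. \<exists>B. \<forall>n. Sb T (\<lambda>x. - f x) n x \<le> real n * (- L + 1/(real m+1)) + B"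
    unfolding AE_all_countable
  proof
    fix m :: nat
    show "AE x in M. \<exists>B. \<forall>n. Sb T (\<lambda>x. - f x) n x \<le> real n * (- L + 1/(real m+1)) + B"
      by (rule upper[OF fm' fb']) (simp add: Lm L_def)
  qed
  have C0: "0 \<le> C" using fb[of undefined] by simp
  show ?thesis using U D
  proof eventually_elim
    case (elim x)
    define a where "a n = (\<Sum>i\<in>{1..n}. f ((T^^i) x))" for n
    have aS: "a n = Sb T f (Suc n) x - f x" for n unfolding a_def Sb_def sum_1n by simp
    have aS': "- a n = Sb T (\<lambda>x. - f x) (Suc n) x + f x" for n unfolding a_def Sb_def sum_1n
      by (simp add: sum_negf)
    have fx: "\<bar>f x\<bar> \<le> C" by (rule fb)
    have inv: "0 \<le> 1/(real m+1)" "1/(real m+1) \<le> 1" for m :: nat by (auto simp: field_simps)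
    show ?case unfolding a_def[symmetric] L_def[symmetric]
    proof (rule conv_lemma)
      show "\<forall>m::nat. \<exists>B. \<forall>n. a n \<le> real n * (L + 1/(real m+1)) + B"
      proof
        fix m :: nat
        obtain B where B: "\<And>n. Sb T f n x \<le> real n * (L + 1/(real m+1)) + B" using elim(1) by blast
        have "a n \<le> real n * (L + 1/(real m+1)) + (B + \<bar>L\<bar> + 1 + C)" for n
        proof -
          define q where "q = 1/(real m+1)"
          have e: "real (Suc n) * (L+q) = real n*(L+q) + (L+q)" by (simp add: algebra_simps)
          show ?thesis using B[of "Suc n"] aS[of n] fx inv[of m] e abs_ge_self[of L] abs_ge_minus_self[of "f x"]
            unfolding q_def[symmetric] by linarith
        qed
        then show "\<exists>B. \<forall>n. a n \<le> real n * (L + 1/(real m+1)) + B" by blast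
      qed
      show "\<forall>m::nat. \<exists>B. \<forall>n. - a n \<le> real n * (- L + 1/(real m+1)) + B"
      proof
        fix m :: nat
        obtain B where B: "\<And>n. Sb T (\<lambda>x. - f x) n x \<le> real n * (- L + 1/(real m+1)) + B" using elim(2) by blast
        have "- a n \<le> real n * (- L + 1/(real m+1)) + (B + \<bar>L\<bar> + 1 + C)" for n
        proof -
          define q where "q = 1/(real m+1)"
          have e: "real (Suc n) * (-L+q) = real n*(-L+q) + (-L+q)" by (simp add: algebra_simps)
          show ?thesis using B[of "Suc n"] aS'[of n] fx inv[of m] e abs_ge_minus_self[of L] abs_ge_self[of "f x"]
            unfolding q_def[symmetric] by linarith
        qed
        then show "\<exists>B. \<forall>n. - a n \<le> real n * (- L + 1/(real m+1)) + B" by blast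
      qed
    qed
  qed
qed

end


lemma small_m: assumes "0 < (d::real)" shows "\<exists>m::nat. 1/(real m+1) < d"
proof -
  obtain n :: nat where n: "n > 0" "inverse (real n) < d" using ex_inverse_of_nat_less[OF assms] by blast
  have "1/(real n+1) \<le> inverse (real n)" using n(1) by (simp add: field_simps)
  then show ?thesis using n(2) by (metis order_le_less_trans)
qed

lemma double_avg:
  fixes K :: "'a::metric_space \<times> 'a \<Rightarrow> real" and u :: "nat \<Rightarrow> 'a" and h :: "'a \<Rightarrow> real"
    and N :: "nat \<Rightarrow> 'a set"
  assumes U: "\<And>e. 0<e \<Longrightarrow> \<exists>d>0. \<forall>y y' z. dist y y' < d \<longrightarrow> \<bar>K(y,z) - K(y',z)\<bar> < e"
    and hU: "\<And>e. 0<e \<Longrightarrow> \<exists>d>0. \<forall>y y'. dist y y' < d \<longrightarrow> \<bar>h y - h y'\<bar> < e"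
    and Nfin: "\<And>m. finite (N m)" and Ncov: "\<And>m y. \<exists>p\<in>N m. dist p y < 1/(real m+1)"
    and conv: "\<And>m p. p \<in> N m \<Longrightarrow> (\<lambda>n. (\<Sum>j\<in>{1..n}. K(p, u j))/real n) \<longlonglongrightarrow> h p"
    and convh: "(\<lambda>n. (\<Sum>i\<in>{1..n}. h(u i))/real n) \<longlonglongrightarrow> L"
  shows "(\<lambda>n. (1/(real n)^2) * (\<Sum>i\<in>{1..n}. \<Sum>j\<in>{1..n}. K(u i, u j))) \<longlonglongrightarrow> L"
proof -
  define avg where "avg y n = (\<Sum>j\<in>{1..n}. K(y, u j))/real n" for y n
  have unif: "eventually (\<lambda>n. \<forall>y. \<bar>avg y n - h y\<bar> < e) sequentially" if e: "0 < e" for e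
  proof -
    obtain d1 where d1: "d1>0" "\<forall>y y' z. dist y y' < d1 \<longrightarrow> \<bar>K(y,z)-K(y',z)\<bar> < e/3" using U[of "e/3"] e by auto
    obtain d2 where d2: "d2>0" "\<forall>y y'. dist y y' < d2 \<longrightarrow> \<bar>h y - h y'\<bar> < e/3" using hU[of "e/3"] e by auto
    obtain m :: nat where m: "1/(real m+1) < min d1 d2" using small_m[of "min d1 d2"] d1 d2 by auto
    have "\<forall>p\<in>N m. eventually (\<lambda>n. \<bar>avg p n - h p\<bar> < e/3) sequentially"
    proof
      fix p assume p: "p \<in> N m"
      show "eventually (\<lambda>n. \<bar>avg p n - h p\<bar> < e/3) sequentially"
        using tendstoD[OF conv[OF p], of "e/3"] e unfolding avg_def dist_real_def by simp
    qed
    then have ev: "eventually (\<lambda>n. \<forall>p\<in>N m. \<bar>avg p n - h p\<bar> < e/3) sequentially"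
      by (rule eventually_ball_finite[OF Nfin])
    show ?thesis using ev eventually_gt_at_top[of "0::nat"]
    proof eventually_elim
      case (elim n)
      show ?case
      proof
        fix y
        obtain p where p: "p \<in> N m" "dist p y < 1/(real m+1)" using Ncov by blast
        have dy: "dist y p < d1" "dist p y < d2" using p(2) m by (auto simp: dist_commute)
        have npos: "0 < real n" using elim(2) by simp
        have s: "\<bar>\<Sum>j\<in>{1..n}. K(y,u j) - K(p,u j)\<bar> \<le> real n * (e/3)"
        proof -
          have "\<bar>\<Sum>j\<in>{1..n}. K(y,u j) - K(p,u j)\<bar> \<le> (\<Sum>j\<in>{1..n}. \<bar>K(y,u j) - K(p,u j)\<bar>)" by (rule sum_abs)
          also have "\<dots> \<le> real (card {1..n}) * (e/3)"
            by (rule sum_bounded_above) (use d1 dy in \<open>auto intro: less_imp_le\<close>)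
          finally show ?thesis by simp
        qed
        have "avg y n - avg p n = (\<Sum>j\<in>{1..n}. K(y,u j) - K(p,u j)) / real n"
          unfolding avg_def by (simp add: sum_subtractf diff_divide_distrib)
        then have a1: "\<bar>avg y n - avg p n\<bar> \<le> e/3" using s npos
          by (simp add: abs_divide pos_divide_le_eq mult.commute)
        have a2: "\<bar>avg p n - h p\<bar> < e/3" using elim(1) p(1) by blast
        have a3: "\<bar>h p - h y\<bar> < e/3" using d2 dy by auto
        show "\<bar>avg y n - h y\<bar> < e" using a1 a2 a3 by linarith
      qed
    qed
  qed
  show ?thesis
  proof (rule tendstoI)
    fix r :: real assume r: "0 < r"
    have ev1: "eventually (\<lambda>n. \<bar>(\<Sum>i\<in>{1..n}. h(u i))/real n - L\<bar> < r/2) sequentially"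
      using tendstoD[OF convh, of "r/2"] r unfolding dist_real_def by simp
    have ev2: "eventually (\<lambda>n. \<forall>y. \<bar>avg y n - h y\<bar> < r/2) sequentially" using unif[of "r/2"] r by simp
    show "eventually (\<lambda>n. dist ((1/(real n)^2) * (\<Sum>i\<in>{1..n}. \<Sum>j\<in>{1..n}. K(u i, u j))) L < r) sequentially"
      using ev1 ev2 eventually_gt_at_top[of "0::nat"]
    proof eventually_elim
      case (elim n)
      have npos: "0 < real n" using elim(3) by simp
      have D: "(1/(real n)^2) * (\<Sum>i\<in>{1..n}. \<Sum>j\<in>{1..n}. K(u i, u j)) = (\<Sum>i\<in>{1..n}. avg (u i) n) / real n"
        unfolding avg_def by (simp add: sum_divide_distrib[symmetric] power2_eq_square)
      have s: "\<bar>\<Sum>i\<in>{1..n}. avg (u i) n - h (u i)\<bar> \<le> real n * (r/2)"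
      proof -
        have "\<bar>\<Sum>i\<in>{1..n}. avg (u i) n - h (u i)\<bar> \<le> (\<Sum>i\<in>{1..n}. \<bar>avg (u i) n - h (u i)\<bar>)" by (rule sum_abs)
        also have "\<dots> \<le> real (card {1..n}) * (r/2)"
          by (rule sum_bounded_above) (use elim(2) in \<open>auto intro: less_imp_le\<close>)
        finally show ?thesis by simp
      qed
      have "(\<Sum>i\<in>{1..n}. avg (u i) n) / real n - (\<Sum>i\<in>{1..n}. h(u i))/real n
            = (\<Sum>i\<in>{1..n}. avg (u i) n - h (u i)) / real n"
        by (simp add: sum_subtractf diff_divide_distrib)
      then have a1: "\<bar>(\<Sum>i\<in>{1..n}. avg (u i) n) / real n - (\<Sum>i\<in>{1..n}. h(u i))/real n\<bar> \<le> r/2"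
        using s npos by (simp add: abs_divide pos_divide_le_eq mult.commute)
      show ?case unfolding D dist_real_def using a1 elim(1) by linarith
    qed
  qed
qed



theorem proposition2p10:
  fixes M :: "'a::metric_space measure"
    and K :: "'a \<times> 'a \<Rightarrow> real"
    and T :: "'a \<Rightarrow> 'a"
  assumes "compact (UNIV :: 'a set)"
    and "continuous_on UNIV K"
    and "prob_space M"
    and "sets M = sets borel"
    and "ergodic_mpt M T"
  shows "AE x in M.
           (\<lambda>n. (1 / (real n)^2) * (\<Sum>i\<in>{1..n}. \<Sum>j\<in>{1..n}. K ((T ^^ i) x, (T ^^ j) x)))
           \<longlonglongrightarrow> (\<integral>y. \<integral>z. K (y, z) \<partial>M \<partial>M)"
proof -
  have sp: "space M = UNIV" using sets_eq_imp_space_eq[OF assms(4)] by simp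
  interpret erg M T using assms(3,5) sp by (simp add: erg_def erg_axioms_def)
  have bm: "f \<in> borel_measurable M" if "continuous_on UNIV f" for f :: "'a \<Rightarrow> real"
  proof -
    have "measurable M borel = measurable borel (borel::real measure)" by (rule measurable_cong_sets[OF assms(4) refl])
    then show ?thesis using borel_measurable_continuous_onI[OF that] by simp
  qed
  have cK: "compact (UNIV :: ('a\<times>'a) set)" using compact_Times[OF assms(1) assms(1)] by simp
  have "bounded (K ` UNIV)" using compact_continuous_image[OF assms(2) cK] by (rule compact_imp_bounded)
  then obtain C where C: "\<And>p. \<bar>K p\<bar> \<le> C" unfolding bounded_real by blast
  have ucK: "uniformly_continuous_on UNIV K" using compact_uniformly_continuous[OF assms(2) cK] .
  have U: "\<exists>d>0. \<forall>y y' z. dist y y' < d \<longrightarrow> \<bar>K(y,z) - K(y',z)\<bar> < e" if e: "0<e" for e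
  proof -
    obtain d where d: "d>0" "\<forall>p p'. dist p' p < d \<longrightarrow> dist (K p') (K p) < e"
      using ucK e unfolding uniformly_continuous_on_def by blast
    have "\<forall>y y' z. dist y y' < d \<longrightarrow> \<bar>K(y,z) - K(y',z)\<bar> < e"
    proof (intro allI impI)
      fix y y' z :: 'a assume "dist y y' < d"
      moreover have "dist (y,z) (y',z) = dist y y'" by (simp add: dist_Pair_Pair)
      ultimately show "\<bar>K(y,z) - K(y',z)\<bar> < e" using d(2) by (metis dist_real_def)
    qed
    then show ?thesis using d(1) by blast
  qed
  have Kc: "continuous_on UNIV (\<lambda>z. K (p, z))" for p
    by (rule continuous_on_compose2[OF assms(2)]) (auto intro: continuous_intros)
  have Km: "(\<lambda>z. K (p, z)) \<in> borel_measurable M" for p using bm[OF Kc] .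
  have Ki: "integrable M (\<lambda>z. K (p, z))" for p using bint[OF Km C] .
  define h where "h y = (\<integral>z. K (y, z) \<partial>M)" for y
  have hU: "\<exists>d>0. \<forall>y y'. dist y y' < d \<longrightarrow> \<bar>h y - h y'\<bar> < e" if e: "0<e" for e
  proof -
    obtain d where d: "d>0" "\<forall>y y' z. dist y y' < d \<longrightarrow> \<bar>K(y,z) - K(y',z)\<bar> < e/2"
      using U[of "e/2"] e by auto
    have "\<bar>h y - h y'\<bar> < e" if dy: "dist y y' < d" for y y' :: 'a
    proof -
      have eq: "h y - h y' = (\<integral>z. K (y, z) - K (y', z) \<partial>M)" unfolding h_def using Ki by simp
      have i: "integrable M (\<lambda>z. K (y, z) - K (y', z))" using Ki by simp
      have kz: "\<bar>K(y,z)-K(y',z)\<bar> < e/2" for z using d(2) dy by blast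
      have pw1: "K(y,z)-K(y',z) \<le> e/2" for z using kz[of z] by linarith
      have pw2: "-(e/2) \<le> K(y,z)-K(y',z)" for z using kz[of z] by linarith
      have "(\<integral>z. K (y, z) - K (y', z) \<partial>M) \<le> (\<integral>z. e/2 \<partial>M)"
        by (rule integral_mono[OF i]) (use pw1 in auto)
      moreover have "(\<integral>z. -(e/2) \<partial>M) \<le> (\<integral>z. K (y, z) - K (y', z) \<partial>M)"
        by (rule integral_mono[OF _ i]) (use pw2 in auto)
      ultimately have "\<bar>h y - h y'\<bar> \<le> e/2" unfolding eq by (simp add: prob_space)
      then show ?thesis using e by linarith
    qed
    then show ?thesis using d(1) by blast
  qed
  have hc: "continuous_on UNIV h" unfolding continuous_on_iff
  proof (intro ballI allI impI)
    fix x :: 'a and e :: real assume "0 < e"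
    then obtain d where "d>0" "\<forall>y y'. dist y y' < d \<longrightarrow> \<bar>h y - h y'\<bar> < e" using hU by blast
    then show "\<exists>d>0. \<forall>x'\<in>UNIV. dist x' x < d \<longrightarrow> dist (h x') (h x) < e" by (auto simp: dist_real_def)
  qed
  have hm: "h \<in> borel_measurable M" using bm[OF hc] .
  have hb: "\<bar>h y\<bar> \<le> C" for y
  proof -
    have "(\<integral>z. K (y, z) \<partial>M) \<le> (\<integral>z. C \<partial>M)"
      by (rule integral_mono[OF Ki]) (use C in \<open>auto simp: abs_le_iff\<close>)
    moreover have "(\<integral>z. -C \<partial>M) \<le> (\<integral>z. K (y, z) \<partial>M)"
      by (rule integral_mono[OF _ Ki]) (use C in \<open>auto simp: abs_le_iff\<close>, smt (verit) C)
    ultimately show ?thesis unfolding h_def by (simp add: prob_space)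
  qed
  have tb: "\<forall>\<epsilon>>0. \<exists>k. finite k \<and> k \<subseteq> UNIV \<and> (UNIV::'a set) \<subseteq> (\<Union>x\<in>k. ball x \<epsilon>)"
    by (rule seq_compact_imp_totally_bounded[OF compact_imp_seq_compact[OF assms(1)]])
  have "\<forall>m::nat. \<exists>k::'a set. finite k \<and> (\<forall>y. \<exists>p\<in>k. dist p y < 1/(real m+1))"
  proof
    fix m :: nat
    obtain k where "finite k" "(UNIV::'a set) \<subseteq> (\<Union>x\<in>k. ball x (1/(real m+1)))"
      using tb[rule_format, of "1/(real m+1)"] by auto
    then show "\<exists>k::'a set. finite k \<and> (\<forall>y. \<exists>p\<in>k. dist p y < 1/(real m+1))" by (auto simp: subset_eq)
  qed
  then obtain N :: "nat \<Rightarrow> 'a set" where Nfin: "\<And>m. finite (N m)" and Ncov: "\<And>m (y::'a). \<exists>p\<in>N m. dist p y < 1/(real m+1)"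
    by metis
  have AE1: "AE x in M. \<forall>m. \<forall>p\<in>N m. (\<lambda>n. (\<Sum>j\<in>{1..n}. K(p, (T^^j) x))/real n) \<longlonglongrightarrow> h p"
    unfolding AE_all_countable
  proof
    fix m
    show "AE x in M. \<forall>p\<in>N m. (\<lambda>n. (\<Sum>j\<in>{1..n}. K(p, (T^^j) x))/real n) \<longlonglongrightarrow> h p"
    proof (rule AE_finite_allI[OF Nfin])
      fix p
      show "AE x in M. (\<lambda>n. (\<Sum>j\<in>{1..n}. K(p, (T^^j) x))/real n) \<longlonglongrightarrow> h p"
        using birkhoff[OF Km C] unfolding h_def by simp
    qed
  qed
  have AE2: "AE x in M. (\<lambda>n. (\<Sum>i\<in>{1..n}. h((T^^i) x))/real n) \<longlonglongrightarrow> integral\<^sup>L M h"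
    by (rule birkhoff[OF hm hb])
  show ?thesis using AE1 AE2
  proof eventually_elim
    case (elim x)
    have "(\<lambda>n. (1/(real n)^2) * (\<Sum>i\<in>{1..n}. \<Sum>j\<in>{1..n}. K((T^^i) x, (T^^j) x))) \<longlonglongrightarrow> integral\<^sup>L M h"
      by (rule double_avg[where u="\<lambda>i. (T^^i) x" and N=N, OF U hU Nfin Ncov]) (use elim in auto)
    then show ?case unfolding h_def by simp
  qed
qed


end
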